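(* For $x\in\mathbb{R}$ let \[ H(x)=\begin{bmatrix}1 & -ix & ix & x\\ ix & 1 & -ix & x\\ -ix & ix & 1 & x\\ x & x & x & 1\end{bmatrix}. \] For $x=1/\sqrt{3}$, the matrix $H(x)$ has rank $2$ and spans an extremal ray of the cone $\mathcal{M}_4^+[e]$.
   Context: $\mathcal{M}_4^+[e]$ is the cone of $4\times4$ complex positive semidefinite matrices whose diagonal entries are all equal (complex correlation matrices up to scaling). An extremal ray of a cone $\mathcal{C}$ is $\mathbb{R}_+v$, $v\ne0$, such that $v=a+b$ with $a,b\in\mathcal{C}$ implies $a,b\in\mathbb{R}_+v$. *)

theory Defs
  imports "HOL-Analysis.Analysis"
begin

text \<open>Complex 4x4 matrices are modelled as complex^4^4 (HOL-Analysis).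
  The literal vector [a,b,c,d] puts a,b,c,d at indices 1,2,3,4 (= 0) of type 4.\<close>

definition hermitian_mat :: "complex^'n^'n \<Rightarrow> bool" where
  "hermitian_mat A \<longleftrightarrow> (\<forall>i j. A$i$j = cnj (A$j$i))"

definition psd_mat :: "complex^'n^'n \<Rightarrow> bool" where
  "psd_mat A \<longleftrightarrow> hermitian_mat A \<and>
     (\<forall>v::complex^'n. 0 \<le> Re (\<Sum>i\<in>UNIV. \<Sum>j\<in>UNIV. cnj (v$i) * A$i$j * v$j))"

definition corr_cone :: "(complex^'n^'n) set" where
  "corr_cone = {A. psd_mat A \<and> (\<forall>i j. A$i$i = A$j$j)}"

definition extremal_ray :: "'a::real_vector set \<Rightarrow> 'a \<Rightarrow> bool" where
  "extremal_ray C v \<longleftrightarrow> v \<noteq> 0 \<and> v \<in> C \<and>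
     (\<forall>a\<in>C. \<forall>b\<in>C. v = a + b \<longrightarrow>
        (\<exists>s\<ge>0. a = s *\<^sub>R v) \<and> (\<exists>t\<ge>0. b = t *\<^sub>R v))"

definition Hmat :: "real \<Rightarrow> complex^4^4" where
  "Hmat x = (let y = complex_of_real x in
     vector [vector [1, -\<i>*y, \<i>*y, y],
             vector [\<i>*y, 1, -\<i>*y, y],
             vector [-\<i>*y, \<i>*y, 1, y],
             vector [y, y, y, 1]])"

end

theory Submission
  imports Defs
begin

definition Qf :: "complex^'n^'n \<Rightarrow> complex^'n \<Rightarrow> complex" where
  "Qf M v = (\<Sum>i\<in>UNIV. \<Sum>j\<in>UNIV. cnj (v$i) * M$i$j * v$j)"

definition Yf :: "complex^'n^'n \<Rightarrow> complex^'n \<Rightarrow> complex^'n \<Rightarrow> complex" where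
  "Yf M k w = (\<Sum>i\<in>UNIV. cnj (w$i) * (M *v k)$i)"

lemma psd_Qf: "psd_mat A \<Longrightarrow> 0 \<le> Re (Qf A v)"
  by (simp add: psd_mat_def Qf_def)

lemma Qf_add: "Qf (A + B) v = Qf A v + Qf B v"
  by (simp add: Qf_def algebra_simps sum.distrib)

lemma Qf_Yf: "Qf M v = Yf M v v"
  by (simp add: Qf_def Yf_def matrix_vector_mult_def sum_distrib_left mult.assoc)

lemma Yf_add: "Yf (A + B) k w = Yf A k w + Yf B k w"
  by (simp add: Yf_def matrix_vector_mult_def algebra_simps sum.distrib)

lemma Yf_alt: "Yf M k w = (\<Sum>i\<in>UNIV. \<Sum>j\<in>UNIV. cnj (w$i) * M$i$j * k$j)"
  by (simp add: Yf_def matrix_vector_mult_def sum_distrib_left mult.assoc)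

lemma Qf_expand:
  fixes t :: real
  shows "Qf M (k + complex_of_real t *s w) = Qf M k + of_real t * (\<Sum>i\<in>UNIV. \<Sum>j\<in>UNIV. cnj (k$i) * M$i$j * w$j) + of_real t * Yf M k w + of_real t * of_real t * Qf M w"
proof -
  have pt: "cnj ((k + complex_of_real t *s w)$i) * M$i$j * (k + complex_of_real t *s w)$j =
     cnj (k$i) * M$i$j * k$j + of_real t * (cnj (k$i) * M$i$j * w$j) + of_real t * (cnj (w$i) * M$i$j * k$j)
     + of_real t * of_real t * (cnj (w$i) * M$i$j * w$j)" for i j
    by (simp add: algebra_simps)
  show ?thesis
    unfolding Qf_def Yf_alt pt by (simp add: sum.distrib sum_distrib_left)
qed

lemma herm_cross:
  assumes "hermitian_mat M"
  shows "(\<Sum>i\<in>UNIV. \<Sum>j\<in>UNIV. cnj (k$i) * M$i$j * w$j) = cnj (Yf M k w)"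
proof -
  have h: "cnj (M$i$j) = M$j$i" for i j
    using assms unfolding hermitian_mat_def by (metis complex_cnj_cnj)
  have "cnj (Yf M k w) = (\<Sum>i\<in>UNIV. \<Sum>j\<in>UNIV. w$i * cnj (M$i$j) * cnj (k$j))"
    by (simp add: Yf_def matrix_vector_mult_def sum_distrib_left mult.assoc)
  also have "\<dots> = (\<Sum>i\<in>UNIV. \<Sum>j\<in>UNIV. w$i * M$j$i * cnj (k$j))"
    using h by simp
  also have "\<dots> = (\<Sum>j\<in>UNIV. \<Sum>i\<in>UNIV. w$i * M$j$i * cnj (k$j))"
    by (rule sum.swap)
  also have "\<dots> = (\<Sum>i\<in>UNIV. \<Sum>j\<in>UNIV. cnj (k$i) * M$i$j * w$j)"
    by (simp add: algebra_simps)
  finally show ?thesis by simp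
qed

lemma Re_Qf_expand:
  fixes t :: real
  assumes "hermitian_mat M"
  shows "Re (Qf M (k + complex_of_real t *s w)) = Re (Qf M k) + 2 * t * Re (Yf M k w) + t * t * Re (Qf M w)"
  unfolding Qf_expand herm_cross[OF assms] by simp

lemma quad_zero:
  fixes c a :: real
  assumes "\<And>t. 0 \<le> 2*t*c + t*t*a"
  shows "c = 0"
proof (rule ccontr)
  assume "c \<noteq> 0"
  define D where "D = \<bar>a\<bar> + 1"
  have D: "D > 0" by (simp add: D_def)
  define t where "t = - c / D"
  have eq: "D*D * (2*t*c + t*t*a) = c*c*(a - 2*D)"
    using D by (simp add: t_def field_simps)
  have "a - 2*D < 0" by (simp add: D_def)
  moreover have "c*c > 0" using \<open>c \<noteq> 0\<close> by (metis not_real_square_gt_zero)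
  ultimately have "c*c*(a - 2*D) < 0" by (simp add: mult_pos_neg)
  moreover have "D*D * (2*t*c + t*t*a) \<ge> 0" using assms[of t] D by simp
  ultimately show False using eq by linarith
qed

lemma Yf_axis: "Yf M k (axis j c) = cnj c * (M *v k)$j"
proof -
  have eq: "(\<lambda>i. cnj ((axis j c)$i) * (M *v k)$i) = (\<lambda>i. if i = j then cnj c * (M *v k)$i else 0)"
    by (auto simp: axis_def)
  show ?thesis unfolding Yf_def eq by simp
qed

lemma psd_herm: "psd_mat A \<Longrightarrow> hermitian_mat A"
  by (simp add: psd_mat_def)

lemma herm_add: "hermitian_mat A \<Longrightarrow> hermitian_mat B \<Longrightarrow> hermitian_mat (A + B)"
  unfolding hermitian_mat_def by (metis complex_cnj_add vector_add_component)

lemma kernel_sub: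
  assumes A: "psd_mat A" and B: "psd_mat B" and k: "(A + B) *v k = 0"
  shows "A *v k = 0"
proof -
  have hA: "hermitian_mat A" and hB: "hermitian_mat B" using A B by (simp_all add: psd_herm)
  have hH: "hermitian_mat (A + B)" using hA hB by (rule herm_add)
  have YH: "Yf (A + B) k w = 0" for w using k by (simp add: Yf_def)
  have QH0: "Qf (A+B) k = 0" using Qf_Yf[of "A+B" k] YH[of k] by simp
  have QH0': "Re (Qf A k) + Re (Qf B k) = 0" using arg_cong[OF QH0, of Re] by (simp add: Qf_add)
  have Y0: "Re (Yf A k w) = 0" for w
  proof -
    have key: "Re (Qf A (k + complex_of_real t *s w)) + Re (Qf B (k + complex_of_real t *s w)) = t * t * Re (Qf (A+B) w)" for t
      using Re_Qf_expand[OF hH, of k t w] YH[of w] QH0'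
      by (simp add: Qf_add)
    have QA0: "Re (Qf A k) = 0"
      using key[of 0] psd_Qf[OF A, of k] psd_Qf[OF B, of k] by simp
    show ?thesis
    proof (rule quad_zero)
      fix t
      show "0 \<le> 2 * t * Re (Yf A k w) + t * t * Re (Qf A w)"
        using Re_Qf_expand[OF hA, of k t w] QA0 psd_Qf[OF A, of "k + complex_of_real t *s w"] by simp
    qed
  qed
  show ?thesis
  proof (rule iffD2[OF vec_eq_iff], rule allI)
    fix j
    have "Re ((A *v k)$j) = 0" using Y0[of "axis j 1"] by (simp add: Yf_axis)
    moreover have "Im ((A *v k)$j) = 0" using Y0[of "axis j \<i>"] by (simp add: Yf_axis)
    ultimately show "(A *v k)$j = 0$j" by (simp add: complex_eq_iff)
  qed
qed

lemma vector_4 [simp]: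
 "(vector [a,b,c,d] ::('a::zero)^4)$1 = a"
 "(vector [a,b,c,d] ::('a::zero)^4)$2 = b"
 "(vector [a,b,c,d] ::('a::zero)^4)$3 = c"
 "(vector [a,b,c,d] ::('a::zero)^4)$4 = d"
  unfolding vector_def by simp_all

definition yy :: complex where "yy = complex_of_real (1 / sqrt 3)"
abbreviation HH where "HH \<equiv> Hmat (1 / sqrt 3)"

lemma yy2: "yy * yy = 1/3"
proof -
  have "(1 / sqrt 3) * (1 / sqrt 3) = (1/3::real)" by (simp add: field_simps)
  then have "complex_of_real ((1 / sqrt 3) * (1 / sqrt 3)) = 1/3" by simp
  then show ?thesis unfolding yy_def by (simp only: of_real_mult)
qed

lemma yy2': "yy * (yy * z) = z / 3"
  using yy2 by (metis mult.assoc mult.commute times_divide_eq_right mult_1)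

lemma cnj_yy [simp]: "cnj yy = yy" by (simp add: yy_def)

lemma ii2: "\<i> * \<i> = -1" by simp

lemma HE [simp]:
  shows "HH $1$1 = 1" "HH $1$2 = -\<i>*yy" "HH $1$3 = \<i>*yy" "HH $1$4 = yy"
        "HH $2$1 = \<i>*yy" "HH $2$2 = 1" "HH $2$3 = -\<i>*yy" "HH $2$4 = yy"
        "HH $3$1 = -\<i>*yy" "HH $3$2 = \<i>*yy" "HH $3$3 = 1" "HH $3$4 = yy"
        "HH $4$1 = yy" "HH $4$2 = yy" "HH $4$3 = yy" "HH $4$4 = 1"
  by (simp_all add: Hmat_def yy_def Let_def)

lemma H_herm: "hermitian_mat HH"
  unfolding hermitian_mat_def forall_4 by simp

lemma H_diag: "\<forall>i j. HH$i$i = HH$j$j"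
  unfolding forall_4 by simp

lemma H_psd: "psd_mat HH"
proof -
  have "0 \<le> Re (Qf HH v)" for v
  proof -
    define al where "al = yy * (v$1 + v$2 + v$3) + v$4"
    define be where "be = 2/3 * v$1 + (-\<i>*yy - 1/3) * v$2 + (\<i>*yy - 1/3) * v$3"
    have cal: "cnj al = yy * (cnj (v$1) + cnj (v$2) + cnj (v$3)) + cnj (v$4)" by (simp add: al_def)
    have cbe: "cnj be = 2/3 * cnj (v$1) + (\<i>*yy - 1/3) * cnj (v$2) + (-\<i>*yy - 1/3) * cnj (v$3)" by (simp add: be_def)
    have "Qf HH v = al * cnj al + 3/2 * (be * cnj be)"
      unfolding cal cbe unfolding Qf_def sum_4 HE al_def be_def using yy2 ii2 by algebra
    also have "\<dots> = of_real ((cmod al)^2 + 3/2 * (cmod be)^2)"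
      unfolding complex_norm_square[symmetric] by simp
    finally show ?thesis by simp
  qed
  then show ?thesis using H_herm unfolding psd_mat_def Qf_def by simp
qed

lemma H_cone: "HH \<in> corr_cone"
  unfolding corr_cone_def using H_psd H_diag by simp

definition k1 :: "complex^4" where "k1 = vector [-2*\<i>*yy, \<i>*yy-1, 1+\<i>*yy, 0]"
definition k2 :: "complex^4" where "k2 = vector [1, 1, 1, -3*yy]"

lemma H_k1: "HH *v k1 = 0"
  unfolding vec_eq_iff forall_4 zero_index matrix_vector_mult_def vec_lambda_beta sum_4 k1_def vector_4 HE
  by (simp add: algebra_simps yy2 yy2')

lemma H_k2: "HH *v k2 = 0"
  unfolding vec_eq_iff forall_4 zero_index matrix_vector_mult_def vec_lambda_beta sum_4 k2_def vector_4 HE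
  by (simp add: algebra_simps yy2 yy2')

lemma solve_p:
 fixes d p q r u m n pc qc rc uc mc nc :: complex
  assumes e0: "d*(-2*\<i>*yy) + p*(\<i>*yy-1) + q*(1+\<i>*yy) + r*0 = 0"
  and e1: "pc*(-2*\<i>*yy) + d*(\<i>*yy-1) + u*(1+\<i>*yy) + m*0 = 0"
  and e2: "qc*(-2*\<i>*yy) + uc*(\<i>*yy-1) + d*(1+\<i>*yy) + n*0 = 0"
  and e3: "rc*(-2*\<i>*yy) + mc*(\<i>*yy-1) + nc*(1+\<i>*yy) + d*0 = 0"
  and e4: "d*1 + p*1 + q*1 + r*(-3*yy) = 0"
  and e5: "pc*1 + d*1 + u*1 + m*(-3*yy) = 0"
  and e6: "qc*1 + uc*1 + d*1 + n*(-3*yy) = 0"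
  and e7: "rc*1 + mc*1 + nc*1 + d*(-3*yy) = 0"
  and e8: "d*(2*\<i>*yy) + pc*(-\<i>*yy-1) + qc*(1-\<i>*yy) + rc*0 = 0"
  and e9: "p*(2*\<i>*yy) + d*(-\<i>*yy-1) + uc*(1-\<i>*yy) + mc*0 = 0"
  and e10: "q*(2*\<i>*yy) + u*(-\<i>*yy-1) + d*(1-\<i>*yy) + nc*0 = 0"
  and e11: "r*(2*\<i>*yy) + m*(-\<i>*yy-1) + n*(1-\<i>*yy) + d*0 = 0"
  and e12: "d*1 + pc*1 + qc*1 + rc*(-3*yy) = 0"
  and e13: "p*1 + d*1 + uc*1 + mc*(-3*yy) = 0"
  and e14: "q*1 + u*1 + d*1 + nc*(-3*yy) = 0"
  and e15: "r*1 + m*1 + n*1 + d*(-3*yy) = 0"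

 shows "p = -\<i>*yy*d"
  using assms yy2 ii2 by algebra

lemma solve_q:
 fixes d p q r u m n pc qc rc uc mc nc :: complex
  assumes e0: "d*(-2*\<i>*yy) + p*(\<i>*yy-1) + q*(1+\<i>*yy) + r*0 = 0"
  and e1: "pc*(-2*\<i>*yy) + d*(\<i>*yy-1) + u*(1+\<i>*yy) + m*0 = 0"
  and e2: "qc*(-2*\<i>*yy) + uc*(\<i>*yy-1) + d*(1+\<i>*yy) + n*0 = 0"
  and e3: "rc*(-2*\<i>*yy) + mc*(\<i>*yy-1) + nc*(1+\<i>*yy) + d*0 = 0"
  and e4: "d*1 + p*1 + q*1 + r*(-3*yy) = 0"
  and e5: "pc*1 + d*1 + u*1 + m*(-3*yy) = 0"
  and e6: "qc*1 + uc*1 + d*1 + n*(-3*yy) = 0"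
  and e7: "rc*1 + mc*1 + nc*1 + d*(-3*yy) = 0"
  and e8: "d*(2*\<i>*yy) + pc*(-\<i>*yy-1) + qc*(1-\<i>*yy) + rc*0 = 0"
  and e9: "p*(2*\<i>*yy) + d*(-\<i>*yy-1) + uc*(1-\<i>*yy) + mc*0 = 0"
  and e10: "q*(2*\<i>*yy) + u*(-\<i>*yy-1) + d*(1-\<i>*yy) + nc*0 = 0"
  and e11: "r*(2*\<i>*yy) + m*(-\<i>*yy-1) + n*(1-\<i>*yy) + d*0 = 0"
  and e12: "d*1 + pc*1 + qc*1 + rc*(-3*yy) = 0"
  and e13: "p*1 + d*1 + uc*1 + mc*(-3*yy) = 0"
  and e14: "q*1 + u*1 + d*1 + nc*(-3*yy) = 0"
  and e15: "r*1 + m*1 + n*1 + d*(-3*yy) = 0"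

 shows "q = \<i>*yy*d"
  using assms yy2 ii2 by algebra

lemma solve_r:
 fixes d p q r u m n pc qc rc uc mc nc :: complex
  assumes e0: "d*(-2*\<i>*yy) + p*(\<i>*yy-1) + q*(1+\<i>*yy) + r*0 = 0"
  and e1: "pc*(-2*\<i>*yy) + d*(\<i>*yy-1) + u*(1+\<i>*yy) + m*0 = 0"
  and e2: "qc*(-2*\<i>*yy) + uc*(\<i>*yy-1) + d*(1+\<i>*yy) + n*0 = 0"
  and e3: "rc*(-2*\<i>*yy) + mc*(\<i>*yy-1) + nc*(1+\<i>*yy) + d*0 = 0"
  and e4: "d*1 + p*1 + q*1 + r*(-3*yy) = 0"
  and e5: "pc*1 + d*1 + u*1 + m*(-3*yy) = 0"
  and e6: "qc*1 + uc*1 + d*1 + n*(-3*yy) = 0"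
  and e7: "rc*1 + mc*1 + nc*1 + d*(-3*yy) = 0"
  and e8: "d*(2*\<i>*yy) + pc*(-\<i>*yy-1) + qc*(1-\<i>*yy) + rc*0 = 0"
  and e9: "p*(2*\<i>*yy) + d*(-\<i>*yy-1) + uc*(1-\<i>*yy) + mc*0 = 0"
  and e10: "q*(2*\<i>*yy) + u*(-\<i>*yy-1) + d*(1-\<i>*yy) + nc*0 = 0"
  and e11: "r*(2*\<i>*yy) + m*(-\<i>*yy-1) + n*(1-\<i>*yy) + d*0 = 0"
  and e12: "d*1 + pc*1 + qc*1 + rc*(-3*yy) = 0"
  and e13: "p*1 + d*1 + uc*1 + mc*(-3*yy) = 0"
  and e14: "q*1 + u*1 + d*1 + nc*(-3*yy) = 0"
  and e15: "r*1 + m*1 + n*1 + d*(-3*yy) = 0"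

 shows "r = yy*d"
  using assms yy2 ii2 by algebra

lemma solve_u:
 fixes d p q r u m n pc qc rc uc mc nc :: complex
  assumes e0: "d*(-2*\<i>*yy) + p*(\<i>*yy-1) + q*(1+\<i>*yy) + r*0 = 0"
  and e1: "pc*(-2*\<i>*yy) + d*(\<i>*yy-1) + u*(1+\<i>*yy) + m*0 = 0"
  and e2: "qc*(-2*\<i>*yy) + uc*(\<i>*yy-1) + d*(1+\<i>*yy) + n*0 = 0"
  and e3: "rc*(-2*\<i>*yy) + mc*(\<i>*yy-1) + nc*(1+\<i>*yy) + d*0 = 0"
  and e4: "d*1 + p*1 + q*1 + r*(-3*yy) = 0"
  and e5: "pc*1 + d*1 + u*1 + m*(-3*yy) = 0"
  and e6: "qc*1 + uc*1 + d*1 + n*(-3*yy) = 0"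
  and e7: "rc*1 + mc*1 + nc*1 + d*(-3*yy) = 0"
  and e8: "d*(2*\<i>*yy) + pc*(-\<i>*yy-1) + qc*(1-\<i>*yy) + rc*0 = 0"
  and e9: "p*(2*\<i>*yy) + d*(-\<i>*yy-1) + uc*(1-\<i>*yy) + mc*0 = 0"
  and e10: "q*(2*\<i>*yy) + u*(-\<i>*yy-1) + d*(1-\<i>*yy) + nc*0 = 0"
  and e11: "r*(2*\<i>*yy) + m*(-\<i>*yy-1) + n*(1-\<i>*yy) + d*0 = 0"
  and e12: "d*1 + pc*1 + qc*1 + rc*(-3*yy) = 0"
  and e13: "p*1 + d*1 + uc*1 + mc*(-3*yy) = 0"
  and e14: "q*1 + u*1 + d*1 + nc*(-3*yy) = 0"
  and e15: "r*1 + m*1 + n*1 + d*(-3*yy) = 0"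

 shows "u = -\<i>*yy*d"
  using assms yy2 ii2 by algebra

lemma solve_m:
 fixes d p q r u m n pc qc rc uc mc nc :: complex
  assumes e0: "d*(-2*\<i>*yy) + p*(\<i>*yy-1) + q*(1+\<i>*yy) + r*0 = 0"
  and e1: "pc*(-2*\<i>*yy) + d*(\<i>*yy-1) + u*(1+\<i>*yy) + m*0 = 0"
  and e2: "qc*(-2*\<i>*yy) + uc*(\<i>*yy-1) + d*(1+\<i>*yy) + n*0 = 0"
  and e3: "rc*(-2*\<i>*yy) + mc*(\<i>*yy-1) + nc*(1+\<i>*yy) + d*0 = 0"
  and e4: "d*1 + p*1 + q*1 + r*(-3*yy) = 0"
  and e5: "pc*1 + d*1 + u*1 + m*(-3*yy) = 0"
  and e6: "qc*1 + uc*1 + d*1 + n*(-3*yy) = 0"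
  and e7: "rc*1 + mc*1 + nc*1 + d*(-3*yy) = 0"
  and e8: "d*(2*\<i>*yy) + pc*(-\<i>*yy-1) + qc*(1-\<i>*yy) + rc*0 = 0"
  and e9: "p*(2*\<i>*yy) + d*(-\<i>*yy-1) + uc*(1-\<i>*yy) + mc*0 = 0"
  and e10: "q*(2*\<i>*yy) + u*(-\<i>*yy-1) + d*(1-\<i>*yy) + nc*0 = 0"
  and e11: "r*(2*\<i>*yy) + m*(-\<i>*yy-1) + n*(1-\<i>*yy) + d*0 = 0"
  and e12: "d*1 + pc*1 + qc*1 + rc*(-3*yy) = 0"
  and e13: "p*1 + d*1 + uc*1 + mc*(-3*yy) = 0"
  and e14: "q*1 + u*1 + d*1 + nc*(-3*yy) = 0"
  and e15: "r*1 + m*1 + n*1 + d*(-3*yy) = 0"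

 shows "m = yy*d"
  using assms yy2 ii2 by algebra

lemma solve_n:
 fixes d p q r u m n pc qc rc uc mc nc :: complex
  assumes e0: "d*(-2*\<i>*yy) + p*(\<i>*yy-1) + q*(1+\<i>*yy) + r*0 = 0"
  and e1: "pc*(-2*\<i>*yy) + d*(\<i>*yy-1) + u*(1+\<i>*yy) + m*0 = 0"
  and e2: "qc*(-2*\<i>*yy) + uc*(\<i>*yy-1) + d*(1+\<i>*yy) + n*0 = 0"
  and e3: "rc*(-2*\<i>*yy) + mc*(\<i>*yy-1) + nc*(1+\<i>*yy) + d*0 = 0"
  and e4: "d*1 + p*1 + q*1 + r*(-3*yy) = 0"
  and e5: "pc*1 + d*1 + u*1 + m*(-3*yy) = 0"
  and e6: "qc*1 + uc*1 + d*1 + n*(-3*yy) = 0"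
  and e7: "rc*1 + mc*1 + nc*1 + d*(-3*yy) = 0"
  and e8: "d*(2*\<i>*yy) + pc*(-\<i>*yy-1) + qc*(1-\<i>*yy) + rc*0 = 0"
  and e9: "p*(2*\<i>*yy) + d*(-\<i>*yy-1) + uc*(1-\<i>*yy) + mc*0 = 0"
  and e10: "q*(2*\<i>*yy) + u*(-\<i>*yy-1) + d*(1-\<i>*yy) + nc*0 = 0"
  and e11: "r*(2*\<i>*yy) + m*(-\<i>*yy-1) + n*(1-\<i>*yy) + d*0 = 0"
  and e12: "d*1 + pc*1 + qc*1 + rc*(-3*yy) = 0"
  and e13: "p*1 + d*1 + uc*1 + mc*(-3*yy) = 0"
  and e14: "q*1 + u*1 + d*1 + nc*(-3*yy) = 0"
  and e15: "r*1 + m*1 + n*1 + d*(-3*yy) = 0"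

 shows "n = yy*d"
  using assms yy2 ii2 by algebra

lemma Qf_axis11: "Qf (M::complex^4^4) (axis 1 1) = M$1$1"
  by (simp add: Qf_def sum_4 axis_def)

lemma yy_ne1: "yy \<noteq> 1" using yy2 by auto

lemma rank_HH: "rank HH = 2"
proof -
  let ?r1 = "row 1 HH" and ?r4 = "row 4 HH"
  have R1: "?r1 = vector [1, -\<i>*yy, \<i>*yy, yy]" unfolding vec_eq_iff forall_4 by (simp add: row_def)
  have R4: "?r4 = vector [yy, yy, yy, 1]" unfolding vec_eq_iff forall_4 by (simp add: row_def)
  have R2: "row 2 HH = (-1/2 + 3/2*\<i>*yy) *s ?r1 + (3/2*yy - \<i>/2) *s ?r4"
    unfolding vec_eq_iff forall_4 by (simp add: row_def algebra_simps yy2 yy2')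
  have R3: "row 3 HH = (-1/2 - 3/2*\<i>*yy) *s ?r1 + (3/2*yy + \<i>/2) *s ?r4"
    unfolding vec_eq_iff forall_4 by (simp add: row_def algebra_simps yy2 yy2')
  have ne: "?r1 \<noteq> ?r4"
  proof
    assume "?r1 = ?r4"
    then have "?r1$1 = ?r4$1" by simp
    then show False using yy_ne1 by (simp add: row_def)
  qed
  have n1: "?r1 \<notin> vec.span {?r4}"
  proof
    assume "?r1 \<in> vec.span {?r4}"
    then obtain c where c: "?r1 = c *s ?r4" by (auto simp: vec.span_singleton)
    have "?r1$1 = (c *s ?r4)$1" "?r1$4 = (c *s ?r4)$4" using c by simp_all
    then have "1 = c * yy" "yy = c" by (simp_all add: row_def)
    then have "1 = yy * yy" by simp
    then show False using yy2 by simp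
  qed
  have n4: "?r4 \<notin> vec.span {}"
  proof
    assume "?r4 \<in> vec.span {}"
    then have "?r4 = 0" by simp
    then have "?r4$4 = 0" by simp
    then show False by (simp add: row_def)
  qed
  have ind: "vec.independent {?r1, ?r4}"
    using n1 n4 ne by (simp add: vec.independent_insert)
  have sub1: "{?r1, ?r4} \<subseteq> rows HH" by (auto simp: rows_def)
  have sub2: "rows HH \<subseteq> vec.span {?r1, ?r4}"
  proof
    fix v assume "v \<in> rows HH"
    then obtain i where v: "v = row i HH" by (auto simp: rows_def)
    have b1: "?r1 \<in> vec.span {?r1, ?r4}" and b4: "?r4 \<in> vec.span {?r1, ?r4}"
      by (simp_all add: vec.span_base)
    consider "i = 1" | "i = 2" | "i = 3" | "i = 4" using exhaust_4 by blast
    then show "v \<in> vec.span {?r1, ?r4}"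
    proof cases
      case 1 then show ?thesis using v b1 by simp
    next
      case 2 then show ?thesis unfolding v \<open>i = 2\<close> R2 using b1 b4 by (intro vec.span_add vec.span_scale)
    next
      case 3 then show ?thesis unfolding v \<open>i = 3\<close> R3 using b1 b4 by (intro vec.span_add vec.span_scale)
    next
      case 4 then show ?thesis using v b4 by simp
    qed
  qed
  have "vec.dim (rows HH) = 2"
    by (rule vec.dim_unique[OF sub1 sub2 ind]) (use ne in simp)
  then show ?thesis by (simp add: row_rank_def_gen)
qed

lemma extremal_HH: "extremal_ray (corr_cone :: (complex^4^4) set) HH"
  unfolding extremal_ray_def
proof (intro conjI ballI impI)
  show "HH \<noteq> 0"
  proof
    assume "HH = 0" then have "HH$1$1 = 0" by simp
    then show False by simp
  qed
  show "HH \<in> corr_cone" by (rule H_cone)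
  fix a b assume aC: "a \<in> corr_cone" and bC: "b \<in> corr_cone" and Hab: "HH = a + b"
  have pa: "psd_mat a" and pb: "psd_mat b" and da: "\<forall>i j. a$i$i = a$j$j"
    using aC bC by (auto simp: corr_cone_def)
  have ha: "hermitian_mat a" using pa by (rule psd_herm)
  have hc: "cnj (a$i$j) = a$j$i" for i j
    using ha unfolding hermitian_mat_def by (metis complex_cnj_cnj)
  have dg: "a$2$2 = a$1$1" "a$3$3 = a$1$1" "a$4$4 = a$1$1" using da by metis+
  have "a *v k1 = 0" using kernel_sub[OF pa pb] H_k1 Hab by simp
  then have K1: "(a *v k1)$i = 0" for i by simp
  have "a *v k2 = 0" using kernel_sub[OF pa pb] H_k2 Hab by simp
  then have K2: "(a *v k2)$i = 0" for i by simp
  have e0: "(a$1$1)*(-2*\<i>*yy) + (a$1$2)*(\<i>*yy-1) + (a$1$3)*(1+\<i>*yy) + (a$1$4)*0 = 0"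
    using K1[of 1] by (simp add: matrix_vector_mult_def sum_4 k1_def dg algebra_simps)
  have e1: "(a$2$1)*(-2*\<i>*yy) + (a$1$1)*(\<i>*yy-1) + (a$2$3)*(1+\<i>*yy) + (a$2$4)*0 = 0"
    using K1[of 2] by (simp add: matrix_vector_mult_def sum_4 k1_def dg algebra_simps)
  have e2: "(a$3$1)*(-2*\<i>*yy) + (a$3$2)*(\<i>*yy-1) + (a$1$1)*(1+\<i>*yy) + (a$3$4)*0 = 0"
    using K1[of 3] by (simp add: matrix_vector_mult_def sum_4 k1_def dg algebra_simps)
  have e3: "(a$4$1)*(-2*\<i>*yy) + (a$4$2)*(\<i>*yy-1) + (a$4$3)*(1+\<i>*yy) + (a$1$1)*0 = 0"
    using K1[of 4] by (simp add: matrix_vector_mult_def sum_4 k1_def dg algebra_simps)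
  have e4: "(a$1$1)*1 + (a$1$2)*1 + (a$1$3)*1 + (a$1$4)*(-3*yy) = 0"
    using K2[of 1] by (simp add: matrix_vector_mult_def sum_4 k2_def dg algebra_simps)
  have e5: "(a$2$1)*1 + (a$1$1)*1 + (a$2$3)*1 + (a$2$4)*(-3*yy) = 0"
    using K2[of 2] by (simp add: matrix_vector_mult_def sum_4 k2_def dg algebra_simps)
  have e6: "(a$3$1)*1 + (a$3$2)*1 + (a$1$1)*1 + (a$3$4)*(-3*yy) = 0"
    using K2[of 3] by (simp add: matrix_vector_mult_def sum_4 k2_def dg algebra_simps)
  have e7: "(a$4$1)*1 + (a$4$2)*1 + (a$4$3)*1 + (a$1$1)*(-3*yy) = 0"
    using K2[of 4] by (simp add: matrix_vector_mult_def sum_4 k2_def dg algebra_simps)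
  have e8: "(a$1$1)*(2*\<i>*yy) + (a$2$1)*(-\<i>*yy-1) + (a$3$1)*(1-\<i>*yy) + (a$4$1)*0 = 0"
    using arg_cong[OF K1[of 1], of cnj] by (simp add: matrix_vector_mult_def sum_4 k1_def hc dg algebra_simps)
  have e9: "(a$1$2)*(2*\<i>*yy) + (a$1$1)*(-\<i>*yy-1) + (a$3$2)*(1-\<i>*yy) + (a$4$2)*0 = 0"
    using arg_cong[OF K1[of 2], of cnj] by (simp add: matrix_vector_mult_def sum_4 k1_def hc dg algebra_simps)
  have e10: "(a$1$3)*(2*\<i>*yy) + (a$2$3)*(-\<i>*yy-1) + (a$1$1)*(1-\<i>*yy) + (a$4$3)*0 = 0"
    using arg_cong[OF K1[of 3], of cnj] by (simp add: matrix_vector_mult_def sum_4 k1_def hc dg algebra_simps)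
  have e11: "(a$1$4)*(2*\<i>*yy) + (a$2$4)*(-\<i>*yy-1) + (a$3$4)*(1-\<i>*yy) + (a$1$1)*0 = 0"
    using arg_cong[OF K1[of 4], of cnj] by (simp add: matrix_vector_mult_def sum_4 k1_def hc dg algebra_simps)
  have e12: "(a$1$1)*1 + (a$2$1)*1 + (a$3$1)*1 + (a$4$1)*(-3*yy) = 0"
    using arg_cong[OF K2[of 1], of cnj] by (simp add: matrix_vector_mult_def sum_4 k2_def hc dg algebra_simps)
  have e13: "(a$1$2)*1 + (a$1$1)*1 + (a$3$2)*1 + (a$4$2)*(-3*yy) = 0"
    using arg_cong[OF K2[of 2], of cnj] by (simp add: matrix_vector_mult_def sum_4 k2_def hc dg algebra_simps)
  have e14: "(a$1$3)*1 + (a$2$3)*1 + (a$1$1)*1 + (a$4$3)*(-3*yy) = 0"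
    using arg_cong[OF K2[of 3], of cnj] by (simp add: matrix_vector_mult_def sum_4 k2_def hc dg algebra_simps)
  have e15: "(a$1$4)*1 + (a$2$4)*1 + (a$3$4)*1 + (a$1$1)*(-3*yy) = 0"
    using arg_cong[OF K2[of 4], of cnj] by (simp add: matrix_vector_mult_def sum_4 k2_def hc dg algebra_simps)

  note E = e0 e1 e2 e3 e4 e5 e6 e7 e8 e9 e10 e11 e12 e13 e14 e15
  have s_p: "a$1$2 = -\<i>*yy*a$1$1" by (rule solve_p[OF E])
  have s_q: "a$1$3 = \<i>*yy*a$1$1" by (rule solve_q[OF E])
  have s_r: "a$1$4 = yy*a$1$1" by (rule solve_r[OF E])
  have s_u: "a$2$3 = -\<i>*yy*a$1$1" by (rule solve_u[OF E])
  have s_m: "a$2$4 = yy*a$1$1" by (rule solve_m[OF E])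
  have s_n: "a$3$4 = yy*a$1$1" by (rule solve_n[OF E])
  define s where "s = Re (a$1$1)"
  have "Im (a$1$1) = 0" using hc[of 1 1] by (simp add: complex_eq_iff)
  then have dR: "a$1$1 = complex_of_real s" by (simp add: s_def complex_eq_iff)
  have c21: "a$2$1 = cnj (a$1$2)" "a$3$1 = cnj (a$1$3)" "a$4$1 = cnj (a$1$4)"
       "a$3$2 = cnj (a$2$3)" "a$4$2 = cnj (a$2$4)" "a$4$3 = cnj (a$3$4)" by (simp_all add: hc)
  have sc: "(s *\<^sub>R HH)$i$j = complex_of_real s * HH$i$j" for i j
    by (simp only: vector_scaleR_component) (simp add: scaleR_conv_of_real)
  have aeq: "a = s *\<^sub>R HH"
    unfolding vec_eq_iff forall_4 c21 sc
    by (simp add: s_p s_q s_r s_u s_m s_n dg dR algebra_simps)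
  have beq: "b = (1 - s) *\<^sub>R HH"
  proof -
    have "b = HH - a" using Hab by simp
    also have "\<dots> = (1 - s) *\<^sub>R HH" by (simp add: aeq scaleR_diff_left)
    finally show ?thesis .
  qed
  have "0 \<le> Re (Qf a (axis 1 1))" by (rule psd_Qf[OF pa])
  then have s0: "0 \<le> s" by (simp add: Qf_axis11 s_def)
  have "0 \<le> Re (Qf b (axis 1 1))" by (rule psd_Qf[OF pb])
  then have s1: "0 \<le> 1 - s" by (simp add: Qf_axis11 beq)
  show "\<exists>s\<ge>0. a = s *\<^sub>R HH" using s0 aeq by blast
  show "\<exists>t\<ge>0. b = t *\<^sub>R HH" using s1 beq by blast
qed

theorem mainTheorem10:
  shows "rank (Hmat (1 / sqrt 3)) = 2 \<and> extremal_ray (corr_cone :: (complex^4^4) set) (Hmat (1 / sqrt 3))"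
  using rank_HH extremal_HH by simp

end
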